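(* Let $\mathcal{H}$ be a hedgehog and let $k>2$ be an integer. Then the $k$th Order Preserving Set $\mathcal{P}_k$ of $\mathcal{H}$ is singular, i.e. there exists $s\in[0,2\pi)$ with $\mathcal{P}_k'(s)=0$. Moreover, if $\mathcal{P}_k$ has only finitely many singular points (parameters $s\in[0,2\pi)$ with $\mathcal{P}_k'(s)=0$), then their number is divisible by $k$.
   Context: Write $u(s)=(\cos s,\sin s)$, $u'(s)=(-\sin s,\cos s)$. A hedgehog is a closed planar curve determined by a smooth $2\pi$-periodic function $h$ (its support function) via $\mathcal{H}(s)=h(s)u(s)+h'(s)u'(s)$. Its average width is $\overline{w}=\frac1\pi\int_0^{2\pi}h(s)\,ds$. For $(x,y)\in\mathbb{R}^2$ let $(x,y)^\perp=(-y,x)$. The $k$th Order Preserving Set of $\mathcal{H}$ is the curve $\mathcal{P}_k(s)=\frac{1}{k}\sum_{j=1}^{k}\Big(\cos\big(\tfrac{2\pi j}{k}\big)\,\mathcal{H}\big(s+\tfrac{2\pi j}{k}\big)-\sin\big(\tfrac{2\pi j}{k}\big)\,\mathcal{H}\big(s+\tfrac{2\pi j}{k}\big)^{\perp}\Big)-\frac{1}{2}\overline{w}\,u(s)$, $s\in[0,2\pi]$. *)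

theory Defs
  imports "HOL-Analysis.Analysis"
begin

definition uvec :: "real \<Rightarrow> real \<times> real" where
  "uvec s = (cos s, sin s)"

definition uvec' :: "real \<Rightarrow> real \<times> real" where
  "uvec' s = (- sin s, cos s)"

definition perp :: "real \<times> real \<Rightarrow> real \<times> real" where
  "perp p = (- snd p, fst p)"

definition smooth_fun :: "(real \<Rightarrow> real) \<Rightarrow> bool" where
  "smooth_fun h \<longleftrightarrow> (\<forall>n x. ((deriv ^^ n) h) differentiable (at x))"

definition hedgehog :: "(real \<Rightarrow> real) \<Rightarrow> real \<Rightarrow> real \<times> real" where
  "hedgehog h s = h s *\<^sub>R uvec s + deriv h s *\<^sub>R uvec' s"

definition avg_width :: "(real \<Rightarrow> real) \<Rightarrow> real" where
  "avg_width h = (1 / pi) * integral {0..2*pi} h"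

definition OPS :: "(real \<Rightarrow> real) \<Rightarrow> nat \<Rightarrow> real \<Rightarrow> real \<times> real" where
  "OPS h k s =
     (1 / real k) *\<^sub>R
       (\<Sum>j=1..k. cos (2*pi*real j / real k) *\<^sub>R hedgehog h (s + 2*pi*real j / real k)
                 - sin (2*pi*real j / real k) *\<^sub>R perp (hedgehog h (s + 2*pi*real j / real k)))
     - ((1/2) * avg_width h) *\<^sub>R uvec s"

definition singular_params :: "(real \<Rightarrow> real \<times> real) \<Rightarrow> real set" where
  "singular_params P = {s \<in> {0..<2*pi}. (P has_vector_derivative 0) (at s)}"

end

theory Submission
  imports Defs
begin


lemma term_eq:
  "cos t *\<^sub>R hedgehog h (s + t) - sin t *\<^sub>R perp (hedgehog h (s + t))
   = (h (s+t) * cos s - deriv h (s+t) * sin s, h (s+t) * sin s + deriv h (s+t) * cos s)"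
proof -
  have c: "cos s = cos (s+t) * cos t + sin (s+t) * sin t"
    using cos_diff[of "s+t" t] by simp
  have sn: "sin s = sin (s+t) * cos t - cos (s+t) * sin t"
    using sin_diff[of "s+t" t] by simp
  show ?thesis
    unfolding hedgehog_def uvec_def uvec'_def perp_def c sn
    by (simp add: algebra_simps)
qed

lemma periodic_deriv:
  fixes f f' :: "real \<Rightarrow> real"
  assumes per: "\<And>x. f (x + p) = f x" and d: "\<And>x. (f has_real_derivative f' x) (at x)"
  shows "f' (x + p) = f' x"
proof -
  have "((\<lambda>x. f (x + p)) has_real_derivative f' (x + p)) (at x)"
    using d[of "x+p"] DERIV_shift by blast
  then have "(f has_real_derivative f' (x + p)) (at x)" using per by simp
  then show ?thesis using d[of x] DERIV_unique by blast
qed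

lemma shift_sum:
  fixes a :: "real \<Rightarrow> real"
  assumes per: "\<And>x. a (x + 2*pi) = a x" and k: "k > 0"
  shows "(\<Sum>j=1..k. a (s + 2*pi/k + 2*pi*real j/k)) = (\<Sum>j=1..k. a (s + 2*pi*real j/k))"
proof -
  define F where "F i = a (s + 2*pi*real i/k)" for i :: nat
  have e: "a (s + 2*pi/k + 2*pi*real j/k) = F (Suc j)" for j
    unfolding F_def using k by (simp add: field_simps)
  have "(\<Sum>j=1..k. F (Suc j) - F j) = F (Suc k) - F 1"
    by (rule sum_Suc_diff) simp
  also have "F (Suc k) = F 1"
  proof -
    have "s + 2*pi*real (Suc k)/k = (s + 2*pi*real 1/k) + 2*pi" using k by (simp add: field_simps)
    then show ?thesis unfolding F_def using per by metis
  qed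
  finally have "(\<Sum>j=1..k. F (Suc j) - F j) = 0" by simp
  then show ?thesis unfolding e by (simp add: sum_subtractf F_def)
qed

lemma ops_eq:
  "OPS h k s = (((1/real k) * (\<Sum>j=1..k. h (s + 2*pi*real j/real k)) - (1/2) * avg_width h) * cos s
                 - ((1/real k) * (\<Sum>j=1..k. deriv h (s + 2*pi*real j/real k))) * sin s,
                ((1/real k) * (\<Sum>j=1..k. h (s + 2*pi*real j/real k)) - (1/2) * avg_width h) * sin s
                 + ((1/real k) * (\<Sum>j=1..k. deriv h (s + 2*pi*real j/real k))) * cos s)"
  unfolding OPS_def term_eq
  by (simp add: prod_eq_iff fst_sum snd_sum uvec_def sum_distrib_left sum_distrib_right
       algebra_simps sum_subtractf[symmetric] sum.distrib[symmetric])

lemma sum_deriv: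
  fixes f f' :: "real \<Rightarrow> real"
  assumes d: "\<And>x. (f has_real_derivative f' x) (at x)"
  shows "((\<lambda>s. (1/real k) * (\<Sum>j=1..k. f (s + 2*pi*real j/real k))) has_real_derivative
          (1/real k) * (\<Sum>j=1..k. f' (s + 2*pi*real j/real k))) (at s)"
proof -
  have "((\<lambda>s. f (s + 2*pi*real j/real k)) has_real_derivative f' (s + 2*pi*real j/real k)) (at s)" for j
    using d DERIV_shift by blast
  then show ?thesis
    by (intro DERIV_cmult DERIV_sum) auto
qed

lemma ops_deriv:
  assumes d0: "\<And>x. (h has_real_derivative h1 x) (at x)"
    and d1: "\<And>x. (h1 has_real_derivative h2 x) (at x)"
  shows "(OPS h k has_vector_derivative
     (((1/real k) * (\<Sum>j=1..k. h (s + 2*pi*real j/real k)) + (1/real k) * (\<Sum>j=1..k. h2 (s + 2*pi*real j/real k))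
       - (1/2) * avg_width h) *\<^sub>R (- sin s, cos s))) (at s)"
proof -
  have h1e: "deriv h = h1" using d0 DERIV_imp_deriv by blast
  define g where "g s = (1/real k) * (\<Sum>j=1..k. h (s + 2*pi*real j/real k))" for s
  define g1 where "g1 s = (1/real k) * (\<Sum>j=1..k. h1 (s + 2*pi*real j/real k))" for s
  define g2 where "g2 s = (1/real k) * (\<Sum>j=1..k. h2 (s + 2*pi*real j/real k))" for s
  define c where "c = (1/2) * avg_width h"
  have dg: "(g has_real_derivative g1 s) (at s)" for s
    unfolding g_def g1_def by (rule sum_deriv[OF d0])
  have dg1: "(g1 has_real_derivative g2 s) (at s)" for s
    unfolding g2_def g1_def by (rule sum_deriv[OF d1])
  have e: "OPS h k = (\<lambda>s. ((g s - c) * cos s - g1 s * sin s, (g s - c) * sin s + g1 s * cos s))"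
    by (rule ext) (simp add: ops_eq h1e g_def g1_def c_def)
  have A: "((\<lambda>s. (g s - c) * cos s - g1 s * sin s) has_real_derivative
            (g s + g2 s - c) * (- sin s)) (at s)"
    by (rule derivative_eq_intros dg dg1 | simp)+ (simp add: algebra_simps)
  have B: "((\<lambda>s. (g s - c) * sin s + g1 s * cos s) has_real_derivative
            (g s + g2 s - c) * cos s) (at s)"
    by (rule derivative_eq_intros dg dg1 | simp)+ (simp add: algebra_simps)
  have "(OPS h k has_vector_derivative ((g s + g2 s - c) * (- sin s), (g s + g2 s - c) * cos s)) (at s)"
    unfolding e
    by (rule has_vector_derivative_Pair) (use A B in \<open>auto simp: has_real_derivative_iff_has_vector_derivative\<close>)
  then show ?thesis by (simp add: g_def g2_def c_def)
qed

theorem proposition3p13: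
  fixes h :: "real \<Rightarrow> real" and k :: nat
  assumes "smooth_fun h"
    and "\<And>s. h (s + 2*pi) = h s"
    and "k > 2"
  shows "(\<exists>s\<in>{0..<2*pi}. (OPS h k has_vector_derivative 0) (at s))
    \<and> (finite (singular_params (OPS h k)) \<longrightarrow> k dvd card (singular_params (OPS h k)))"
proof -
  note per = assms(2)
  have k0: "k > 0" and kr: "real k \<ge> 1" using assms(3) by auto
  define h1 where "h1 = deriv h"
  define h2 where "h2 = deriv h1"
  have d0: "(h has_real_derivative h1 x) (at x)" for x
  proof -
    have "((deriv ^^ 0) h) differentiable (at x)" using assms(1) unfolding smooth_fun_def by blast
    then show ?thesis unfolding h1_def by (simp add: DERIV_deriv_iff_real_differentiable)
  qed
  have d1: "(h1 has_real_derivative h2 x) (at x)" for x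
  proof -
    have "((deriv ^^ 1) h) differentiable (at x)" using assms(1) unfolding smooth_fun_def by blast
    then show ?thesis unfolding h1_def h2_def by (simp add: DERIV_deriv_iff_real_differentiable)
  qed
  have per1: "h1 (x + 2*pi) = h1 x" for x by (rule periodic_deriv[OF per d0])
  have per2: "h2 (x + 2*pi) = h2 x" for x by (rule periodic_deriv[OF per1 d1])
  define T where "T = 2*pi/real k"
  have T0: "T > 0" unfolding T_def using k0 by simp
  have kT: "real k * T = 2*pi" unfolding T_def using k0 by simp
  define g where "g s = (1/real k) * (\<Sum>j=1..k. h (s + 2*pi*real j/real k))" for s
  define g1 where "g1 s = (1/real k) * (\<Sum>j=1..k. h1 (s + 2*pi*real j/real k))" for s
  define g2 where "g2 s = (1/real k) * (\<Sum>j=1..k. h2 (s + 2*pi*real j/real k))" for s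
  define c where "c = (1/2) * avg_width h"
  define q where "q s = g s + g2 s - c" for s
  have D: "(OPS h k has_vector_derivative (q s *\<^sub>R (- sin s, cos s))) (at s)" for s
    using ops_deriv[OF d0 d1, of k s] unfolding q_def g_def g2_def c_def .
  have sing: "(OPS h k has_vector_derivative 0) (at s) \<longleftrightarrow> q s = 0" for s
  proof
    assume "(OPS h k has_vector_derivative 0) (at s)"
    then have "q s *\<^sub>R (- sin s, cos s) = 0" using D vector_derivative_unique_at by blast
    then have "q s = 0 \<or> (sin s = 0 \<and> cos s = 0)" by (auto simp: zero_prod_def)
    then show "q s = 0" using sin_cos_squared_add[of s] by (auto simp: power2_eq_square)
  next
    assume "q s = 0"
    then show "(OPS h k has_vector_derivative 0) (at s)" using D[of s] by (simp add: zero_prod_def)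
  qed
  have gT: "g (s + T) = g s" for s
    unfolding g_def T_def using shift_sum[of h, OF per k0, of s] by simp
  have g1T: "g1 (s + T) = g1 s" for s
    unfolding g1_def T_def using shift_sum[of h1, OF per1 k0, of s] by simp
  have g2T: "g2 (s + T) = g2 s" for s
    unfolding g2_def T_def using shift_sum[of h2, OF per2 k0, of s] by simp
  have qT: "q (s + T) = q s" for s unfolding q_def using gT g2T by simp
  have qmT: "q (s + real m * T) = q s" for s m
  proof (induction m)
    case 0 then show ?case by simp
  next
    case (Suc m)
    have "s + real (Suc m) * T = (s + real m * T) + T" by (simp add: algebra_simps)
    then have "q (s + real (Suc m) * T) = q ((s + real m * T) + T)" by (rule arg_cong)
    also have "\<dots> = q s" using qT[of "s + real m * T"] Suc by simp
    finally show ?case .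
  qed
  have conth: "continuous_on S h" for S
    using d0 by (meson DERIV_continuous continuous_at_imp_continuous_on)
  define Hh where "Hh x = integral {-1..x} h" for x
  have dH: "(Hh has_real_derivative h x) (at x)" if "x > -1" for x
  proof -
    have "(Hh has_real_derivative h x) (at x within {-1..x+1})"
      unfolding Hh_def by (rule integral_has_real_derivative) (use conth that in auto)
    moreover have "at x within {-1..x+1} = at x"
      by (rule at_within_interior) (use that in simp)
    ultimately show ?thesis by metis
  qed
  have th_pos: "2*pi*real j/real k > 0" if "j \<ge> 1" for j :: nat
    using that k0 by simp
  define G where "G s = (1/real k) * (\<Sum>j=1..k. Hh (s + 2*pi*real j/real k)) - c * s + g1 s" for s
  have dG: "(G has_real_derivative q s) (at s)" if "s \<ge> 0" for s
  proof -
    have "((\<lambda>s. Hh (s + 2*pi*real j/real k)) has_real_derivative h (s + 2*pi*real j/real k)) (at s)"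
      if "j \<in> {1..k}" for j
    proof -
      have "2*pi*real j/real k > 0" using th_pos[of j] that by auto
      then have "s + 2*pi*real j/real k > -1" using \<open>s \<ge> 0\<close> by linarith
      then show ?thesis using dH DERIV_shift by blast
    qed
    then have "((\<lambda>s. (1/real k) * (\<Sum>j=1..k. Hh (s + 2*pi*real j/real k))) has_real_derivative g s) (at s)"
      unfolding g_def by (intro DERIV_cmult DERIV_sum) auto
    moreover have "(g1 has_real_derivative g2 s) (at s)"
      unfolding g2_def g1_def by (rule sum_deriv[OF d1])
    ultimately have "(G has_real_derivative g s - c * 1 + g2 s) (at s)"
      unfolding G_def by (intro derivative_intros) auto
    then show ?thesis unfolding q_def by (simp add: algebra_simps)
  qed
  have Dconst: "Hh (x + 2*pi) - Hh x = Hh (0 + 2*pi) - Hh 0" if "x \<ge> 0" for x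
  proof (cases "x = 0")
    case True then show ?thesis by simp
  next
    case False
    then have x0: "x > 0" using that by simp
    have dd: "((\<lambda>x. Hh (x + 2*pi) - Hh x) has_real_derivative h (x + 2*pi) - h x) (at x)" if "x \<ge> 0" for x
    proof -
      have "x + 2*pi > -1" using that pi_gt_zero by linarith
      then have "(Hh has_real_derivative h (x + 2*pi)) (at (x + 2*pi))" by (rule dH)
      then have "((\<lambda>x. Hh (x + 2*pi)) has_real_derivative h (x + 2*pi)) (at x)"
        by (simp add: DERIV_shift)
      moreover have "(Hh has_real_derivative h x) (at x)" using that by (intro dH) simp
      ultimately show ?thesis by (rule DERIV_diff)
    qed
    show ?thesis
    proof (rule DERIV_isconst2[where f = "\<lambda>x. Hh (x + 2*pi) - Hh x", OF x0])
      show "continuous_on {0..x} (\<lambda>x. Hh (x + 2 * pi) - Hh x)"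
        using dd by (meson DERIV_continuous atLeastAtMost_iff continuous_at_imp_continuous_on)
      show "\<And>y. 0 < y \<Longrightarrow> y < x \<Longrightarrow> ((\<lambda>x. Hh (x + 2 * pi) - Hh x) has_real_derivative 0) (at y)"
        using dd per by (metis diff_self less_imp_le)
    qed (use x0 in auto)
  qed
  have int_eq: "Hh (2*pi) - Hh 0 = integral {0..2*pi} h"
  proof -
    have "integral {-1..0} h + integral {0..2*pi} h = integral {-1..2*pi} h"
      by (rule Henstock_Kurzweil_Integration.integral_combine) (auto intro: integrable_continuous_real conth)
    then show ?thesis unfolding Hh_def by simp
  qed
  have GT: "G T = G 0"
  proof -
    define F where "F i = Hh (2*pi*real i/real k)" for i :: nat
    have e1: "Hh (T + 2*pi*real j/real k) = F (Suc j)" for j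
      unfolding F_def T_def using k0 by (simp add: field_simps)
    have e2: "Hh (0 + 2*pi*real j/real k) = F j" for j unfolding F_def by simp
    have "(\<Sum>j=1..k. F (Suc j) - F j) = F (Suc k) - F 1"
      by (rule sum_Suc_diff) simp
    also have "F (Suc k) = Hh (T + 2*pi)" unfolding F_def T_def using k0 by (simp add: field_simps)
    also have "F 1 = Hh T" unfolding F_def T_def by simp
    also have "Hh (T + 2*pi) - Hh T = integral {0..2*pi} h"
      using Dconst[of T] T0 int_eq by simp
    finally have S: "(\<Sum>j=1..k. Hh (T + 2*pi*real j/real k)) - (\<Sum>j=1..k. Hh (0 + 2*pi*real j/real k))
        = integral {0..2*pi} h"
      unfolding e1 e2 by (simp add: sum_subtractf)
    have g10: "g1 T = g1 0" using g1T[of 0] by simp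
    have cT: "c * T = (1/real k) * integral {0..2*pi} h"
      unfolding c_def avg_width_def T_def using k0 by (simp add: field_simps)
    have "G T - G 0 = (1/real k) * ((\<Sum>j=1..k. Hh (T + 2*pi*real j/real k)) - (\<Sum>j=1..k. Hh (0 + 2*pi*real j/real k))) - c * T"
      unfolding G_def using g10 by (simp add: algebra_simps)
    also have "\<dots> = 0" using S cT by simp
    finally show ?thesis by simp
  qed
  obtain z where z: "0 < z" "z < T" "(\<lambda>v. q z * v) = (\<lambda>v. 0)"
  proof -
    have "\<exists>z. 0 < z \<and> z < T \<and> (\<lambda>v. q z * v) = (\<lambda>v. 0)"
    proof (rule Rolle_deriv[OF T0 GT[symmetric]])
      show "continuous_on {0..T} G"
        using dG by (meson DERIV_continuous atLeastAtMost_iff continuous_at_imp_continuous_on)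
      show "\<And>x. 0 < x \<Longrightarrow> x < T \<Longrightarrow> (G has_derivative (\<lambda>v. q x * v)) (at x)"
        using dG less_imp_le unfolding has_field_derivative_def by blast
    qed
    then show ?thesis using that by blast
  qed
  have qz: "q z = 0" using fun_cong[OF z(3), of 1] by simp
  have Tle: "T \<le> 2*pi" using kT T0 kr by (metis mult_le_cancel_right1 order_less_imp_not_less)
  have part1: "\<exists>s\<in>{0..<2*pi}. (OPS h k has_vector_derivative 0) (at s)"
    using z qz Tle sing by (intro bexI[of _ z]) auto
  define Z where "Z = {s \<in> {0..<2*pi}. q s = 0}"
  define Z0 where "Z0 = {s \<in> {0..<T}. q s = 0}"
  have SP: "singular_params (OPS h k) = Z"
    unfolding singular_params_def Z_def using sing by auto
  have bij: "bij_betw (\<lambda>(m, s). s + real m * T) ({..<k} \<times> Z0) Z"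
  proof (rule bij_betw_imageI)
    show "inj_on (\<lambda>(m, s). s + real m * T) ({..<k} \<times> Z0)"
    proof (rule inj_onI)
      fix x y
      assume xy: "x \<in> {..<k} \<times> Z0" "y \<in> {..<k} \<times> Z0"
        and eq0: "(\<lambda>(m, s). s + real m * T) x = (\<lambda>(m, s). s + real m * T) y"
      obtain m s m' s' where xe: "x = (m, s)" and ye: "y = (m', s')" by (cases x, cases y) auto
      have "(m, s) \<in> {..<k} \<times> Z0" "(m', s') \<in> {..<k} \<times> Z0" using xy xe ye by auto
      moreover have eq: "s + real m * T = s' + real m' * T" using eq0 xe ye by simp
      ultimately have s: "0 \<le> s" "s < T" and s': "0 \<le> s'" "s' < T" unfolding Z0_def by auto
      have "m = m'"
      proof (rule ccontr)
        assume "m \<noteq> m'"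
        then consider "real m + 1 \<le> real m'" | "real m' + 1 \<le> real m" by linarith
        then show False
        proof cases
          case 1
          then have "(real m + 1) * T \<le> real m' * T" using T0 by (simp add: mult_right_mono)
          then show False using eq s s' by (simp add: algebra_simps)
        next
          case 2
          then have "(real m' + 1) * T \<le> real m * T" using T0 by (simp add: mult_right_mono)
          then show False using eq s s' by (simp add: algebra_simps)
        qed
      qed
      then show "x = y" using eq xe ye by simp
    qed
    show "(\<lambda>(m, s). s + real m * T) ` ({..<k} \<times> Z0) = Z"
    proof
      show "(\<lambda>(m, s). s + real m * T) ` ({..<k} \<times> Z0) \<subseteq> Z"
      proof (rule image_subsetI)
        fix x assume x: "x \<in> {..<k} \<times> Z0"
        obtain m s where xe: "x = (m, s)" by (cases x) auto
        have m: "m \<in> {..<k}" and sZ: "s \<in> Z0" using x xe by auto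
        then have s: "0 \<le> s" "s < T" "q s = 0" unfolding Z0_def by auto
        have "real m + 1 \<le> real k" using m by simp
        then have "(real m + 1) * T \<le> real k * T" using T0 by (simp add: mult_right_mono)
        then have "s + real m * T < 2*pi" using s kT by (simp add: algebra_simps)
        moreover have "0 \<le> s + real m * T" using s T0 by simp
        ultimately show "(\<lambda>(m, s). s + real m * T) x \<in> Z" unfolding Z_def xe using qmT s by simp
      qed
      show "Z \<subseteq> (\<lambda>(m, s). s + real m * T) ` ({..<k} \<times> Z0)"
      proof
        fix x assume xZ: "x \<in> Z"
        then have x: "0 \<le> x" "x < 2*pi" "q x = 0" unfolding Z_def by auto
        define m where "m = nat \<lfloor>x / T\<rfloor>"
        have fl0: "\<lfloor>x / T\<rfloor> \<ge> 0" using x T0 by simp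
        have mr: "real m = of_int \<lfloor>x / T\<rfloor>" unfolding m_def using fl0 by simp
        have "real m \<le> x / T" "x / T < real m + 1" unfolding mr by linarith+
        then have a: "real m * T \<le> x" "x < (real m + 1) * T" using T0 by (simp_all add: field_simps)
        have "x / T < real k" using x kT T0 by (simp add: field_simps)
        then have "real m < real k" using \<open>real m \<le> x / T\<close> by linarith
        then have mk: "m < k" by simp
        define s where "s = x - real m * T"
        have "q s = 0" using qmT[of s m] x unfolding s_def by simp
        then have "s \<in> Z0" unfolding Z0_def s_def using a by (auto simp: algebra_simps)
        then show "x \<in> (\<lambda>(m, s). s + real m * T) ` ({..<k} \<times> Z0)"
          using mk by (intro image_eqI[of _ _ "(m, s)"]) (auto simp: s_def)
      qed
    qed
  qed
  have "card Z = k * card Z0"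
    using bij_betw_same_card[OF bij] by (simp add: card_cartesian_product)
  then have "k dvd card (singular_params (OPS h k))" unfolding SP by simp
  then show ?thesis using part1 by simp
qed

end
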